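(* Let $D\in\mathbb{D}^n_+$, $W\in\mathbb{R}^{n\times n}$, $u\in\mathbb{R}^n$, $A:=W-D$, and $\mathcal X=\{x\in\mathbb{R}^n: Dx\in[0,1]^n\}$. A point $x^\star\in\mathcal X$ is an equilibrium of the projected dynamical system $\dot x=\Pi_{\mathcal X}(x,Ax+u)$ (i.e. $\Pi_{\mathcal X}(x^\star,Ax^\star+u)=0$) if and only if it is an equilibrium of the linear-threshold network $\dot x=-Dx+[Wx+u]_0^1$ (i.e. $-Dx^\star+[Wx^\star+u]_0^1=0$).
   Context: $\mathbb{D}^n_+$ is the set of positive diagonal matrices; $[z]_0^1=\max(0,\min(z,1))$ elementwise. For $x\in\mathcal X$, $T_{\mathcal X}(x)$ is the tangent cone of $\mathcal X$ at $x$ and $\Pi_{\mathcal X}(x,v)=\arg\min_{y\in T_{\mathcal X}(x)}\|y-v\|^2$. *)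

theory Defs
  imports "HOL-Analysis.Analysis"
begin

definition pos_diag :: "real^'n^'n \<Rightarrow> bool" where
  "pos_diag D \<longleftrightarrow> (\<forall>i j. i \<noteq> j \<longrightarrow> D $ i $ j = 0) \<and> (\<forall>i. D $ i $ i > 0)"

definition clip01 :: "real^'n \<Rightarrow> real^'n" where
  "clip01 z = (\<chi> i. max 0 (min (z $ i) 1))"

definition tangent_cone :: "('a::real_normed_vector) set \<Rightarrow> 'a \<Rightarrow> 'a set" where
  "tangent_cone X x = closure (cone hull ((\<lambda>y. y - x) ` X))"

definition proj_tc :: "('a::euclidean_space) set \<Rightarrow> 'a \<Rightarrow> 'a \<Rightarrow> 'a" where
  "proj_tc X x v = closest_point (tangent_cone X x) v"

end

theory Submission
  imports Defs
begin

lemma diag_mult: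
  assumes "pos_diag D"
  shows "(D *v x) $ i = D $ i $ i * x $ i"
proof -
  have "(D *v x) $ i = (\<Sum>j\<in>UNIV. D $ i $ j * x $ j)"
    by (simp add: matrix_vector_mult_def)
  also have "\<dots> = (\<Sum>j\<in>UNIV. if j = i then D $ i $ i * x $ i else 0)"
    using assms unfolding pos_diag_def by (intro sum.cong) auto
  also have "\<dots> = D $ i $ i * x $ i" by simp
  finally show ?thesis .
qed

lemma cp_zero_iff:
  fixes T :: "'a::euclidean_space set"
  assumes "convex T" "closed T" "0 \<in> T"
  shows "closest_point T v = 0 \<longleftrightarrow> (\<forall>y\<in>T. inner v y \<le> 0)"
proof
  assume h: "closest_point T v = 0"
  show "\<forall>y\<in>T. inner v y \<le> 0"
    using closest_point_dot[OF assms(1,2), of _ v] h by fastforce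
next
  assume h: "\<forall>y\<in>T. inner v y \<le> 0"
  have "\<forall>z\<in>T. dist v 0 \<le> dist v z"
  proof
    fix z assume "z \<in> T"
    then have "inner v z \<le> 0" using h by blast
    then have "norm v ^ 2 \<le> norm (v - z) ^ 2"
    proof -
      have "norm (v - z) ^ 2 = norm v ^ 2 - 2 * inner v z + norm z ^ 2"
        by (simp add: power2_norm_eq_inner inner_diff inner_commute)
      moreover have "0 \<le> norm z ^ 2" by simp
      ultimately show ?thesis using \<open>inner v z \<le> 0\<close> by linarith
    qed
    then have "norm v \<le> norm (v - z)"
      using power2_le_imp_le by fastforce
    then show "dist v 0 \<le> dist v z" by (simp add: dist_norm)
  qed
  then show "closest_point T v = 0"
    using closest_point_unique[OF assms] by metis
qed

lemma tc_iff:
  fixes X :: "'a::euclidean_space set"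
  assumes "convex X" "xs \<in> X"
  shows "closest_point (tangent_cone X xs) v = 0 \<longleftrightarrow> (\<forall>x\<in>X. inner v (x - xs) \<le> 0)"
proof -
  let ?S = "(\<lambda>y. y - xs) ` X"
  have cS: "convex ?S" using convex_translation_subtract[OF assms(1)] .
  have cv: "convex (tangent_cone X xs)" unfolding tangent_cone_def
    by (intro convex_closure convex_cone_hull cS)
  have cl: "closed (tangent_cone X xs)" unfolding tangent_cone_def by simp
  have sub: "?S \<subseteq> tangent_cone X xs" unfolding tangent_cone_def
    by (rule subset_trans[OF hull_subset closure_subset])
  have "xs - xs \<in> ?S" using assms(2) by (rule imageI)
  then have z: "0 \<in> tangent_cone X xs" using sub by auto
  have "(\<forall>y\<in>tangent_cone X xs. inner v y \<le> 0) \<longleftrightarrow> (\<forall>x\<in>X. inner v (x - xs) \<le> 0)"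
  proof
    assume "\<forall>y\<in>tangent_cone X xs. inner v y \<le> 0"
    then show "\<forall>x\<in>X. inner v (x - xs) \<le> 0" using sub by blast
  next
    assume h: "\<forall>x\<in>X. inner v (x - xs) \<le> 0"
    have "cone hull ?S \<subseteq> {y. inner v y \<le> 0}"
    proof
      fix y assume "y \<in> cone hull ?S"
      then obtain c x where "y = c *\<^sub>R (x - xs)" "c \<ge> 0" "x \<in> X"
        unfolding cone_hull_expl by auto
      then show "y \<in> {y. inner v y \<le> 0}" using h
        by (simp add: mult_nonneg_nonpos)
    qed
    moreover have "closed {y. inner v y \<le> 0}"
      by (intro closed_Collect_le continuous_intros)
    ultimately have "tangent_cone X xs \<subseteq> {y. inner v y \<le> 0}"
      unfolding tangent_cone_def by (rule closure_minimal)
    then show "\<forall>y\<in>tangent_cone X xs. inner v y \<le> 0" by blast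
  qed
  then show ?thesis using cp_zero_iff[OF cv cl z] by simp
qed

theorem proposition4:
  fixes D W :: "real^'n^'n" and u xs :: "real^'n"
  assumes "pos_diag D"
    and "xs \<in> {x. \<forall>i. (D *v x) $ i \<in> {0..1}}"
  shows "proj_tc {x. \<forall>i. (D *v x) $ i \<in> {0..1}} xs ((W - D) *v xs + u) = 0
         \<longleftrightarrow> - (D *v xs) + clip01 (W *v xs + u) = 0"
proof -
  let ?X = "{x. \<forall>i. (D *v x) $ i \<in> {0..1}}"
  let ?v = "(W - D) *v xs + u"
  let ?z = "W *v xs + u"
  have dm: "\<And>x i. (D *v x) $ i = D $ i $ i * x $ i" using diag_mult[OF assms(1)] .
  have dp: "\<And>i. D $ i $ i > 0" using assms(1) unfolding pos_diag_def by blast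
  have X: "?X = {x. \<forall>i. 0 \<le> D $ i $ i * x $ i \<and> D $ i $ i * x $ i \<le> 1}"
    by (simp add: dm)
  have cX: "convex ?X" unfolding X convex_def
  proof (intro allI impI ballI, clarsimp)
    fix x y :: "real^'n" and a b :: real and i
    assume x: "\<forall>i. 0 \<le> D $ i $ i * x $ i \<and> D $ i $ i * x $ i \<le> 1"
      and y: "\<forall>i. 0 \<le> D $ i $ i * y $ i \<and> D $ i $ i * y $ i \<le> 1"
      and ab: "0 \<le> a" "0 \<le> b" "a + b = 1"
    have e: "D $ i $ i * (a * x $ i + b * y $ i) = a * (D $ i $ i * x $ i) + b * (D $ i $ i * y $ i)"
      by (simp add: algebra_simps)
    have "0 \<le> a * (D $ i $ i * x $ i) + b * (D $ i $ i * y $ i)"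
      using x y ab by simp
    moreover have "a * (D $ i $ i * x $ i) + b * (D $ i $ i * y $ i) \<le> a * 1 + b * 1"
      using x y ab by (intro add_mono mult_left_mono) auto
    ultimately show "0 \<le> D $ i $ i * (a * x $ i + b * y $ i) \<and> D $ i $ i * (a * x $ i + b * y $ i) \<le> 1"
      using ab e by simp
  qed
  have vi: "\<And>i. ?v $ i = ?z $ i - D $ i $ i * xs $ i"
    by (simp add: matrix_vector_mult_diff_rdistrib dm)
  have xsb: "\<And>i. 0 \<le> D $ i $ i * xs $ i \<and> D $ i $ i * xs $ i \<le> 1"
    using assms(2) by (simp add: dm)
  define P where "P i \<longleftrightarrow> (?v $ i > 0 \<longrightarrow> D $ i $ i * xs $ i = 1) \<and> (?v $ i < 0 \<longrightarrow> D $ i $ i * xs $ i = 0)" for i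
  have step1: "(\<forall>x\<in>?X. inner ?v (x - xs) \<le> 0) \<longleftrightarrow> (\<forall>i. P i)"
  proof
    assume h: "\<forall>x\<in>?X. inner ?v (x - xs) \<le> 0"
    show "\<forall>i. P i"
    proof
      fix i
      have one: "inner ?v ((\<chi> j. if j = i then c else xs $ j) - xs) = ?v $ i * (c - xs $ i)" for c
      proof -
        have "inner ?v ((\<chi> j. if j = i then c else xs $ j) - xs)
              = (\<Sum>j\<in>UNIV. if j = i then ?v $ i * (c - xs $ i) else 0)"
          unfolding inner_vec_def by (intro sum.cong) auto
        then show ?thesis by simp
      qed
      have mem: "(\<chi> j. if j = i then c else xs $ j) \<in> ?X" if "0 \<le> D $ i $ i * c" "D $ i $ i * c \<le> 1" for c
        unfolding X using that xsb by auto
      have d: "D $ i $ i > 0" using dp by blast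
      show "P i" unfolding P_def
      proof (intro conjI impI)
        assume pos: "?v $ i > 0"
        have "?v $ i * (1 / D $ i $ i - xs $ i) \<le> 0"
          using h mem[of "1 / D $ i $ i"] d one by auto
        then have "1 / D $ i $ i - xs $ i \<le> 0" using pos
          by (simp add: mult_le_0_iff)
        then have "1 \<le> D $ i $ i * xs $ i" using d by (simp add: field_simps)
        then show "D $ i $ i * xs $ i = 1" using xsb[of i] by linarith
      next
        assume neg: "?v $ i < 0"
        have "?v $ i * (0 - xs $ i) \<le> 0"
          using h mem[of 0] d one by auto
        then have "0 \<le> ?v $ i * xs $ i" by simp
        then have "xs $ i \<le> 0" using neg mult_neg_pos[of "?v $ i" "xs $ i"] by linarith
        then have "D $ i $ i * xs $ i \<le> 0" using d by (simp add: mult_le_0_iff)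
        then show "D $ i $ i * xs $ i = 0" using xsb[of i] by linarith
      qed
    qed
  next
    assume h: "\<forall>i. P i"
    show "\<forall>x\<in>?X. inner ?v (x - xs) \<le> 0"
    proof
      fix x assume "x \<in> ?X"
      then have xb: "\<And>i. 0 \<le> D $ i $ i * x $ i \<and> D $ i $ i * x $ i \<le> 1" unfolding X by blast
      have "inner ?v (x - xs) = (\<Sum>i\<in>UNIV. ?v $ i * (x $ i - xs $ i))"
        unfolding inner_vec_def by simp
      also have "\<dots> \<le> 0"
      proof (intro sum_nonpos)
        fix i
        have d: "D $ i $ i > 0" using dp by blast
        consider "?v $ i > 0" | "?v $ i < 0" | "?v $ i = 0" by linarith
        then show "?v $ i * (x $ i - xs $ i) \<le> 0"
        proof cases
          case 1
          then have "D $ i $ i * xs $ i = 1" using h P_def by blast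
          then have "D $ i $ i * x $ i \<le> D $ i $ i * xs $ i" using xb[of i] by linarith
          then have "x $ i \<le> xs $ i" using d by simp
          then show ?thesis using 1 by (simp add: mult_nonneg_nonpos)
        next
          case 2
          then have "D $ i $ i * xs $ i = 0" using h P_def by blast
          then have "D $ i $ i * xs $ i \<le> D $ i $ i * x $ i" using xb[of i] by linarith
          then have "xs $ i \<le> x $ i" using d by simp
          then show ?thesis using 2 by (simp add: mult_nonpos_nonneg)
        qed simp
      qed
      finally show "inner ?v (x - xs) \<le> 0" .
    qed
  qed
  have step2: "(\<forall>i. P i) \<longleftrightarrow> - (D *v xs) + clip01 ?z = 0"
  proof -
    have "- (D *v xs) + clip01 ?z = 0 \<longleftrightarrow> (\<forall>i. D $ i $ i * xs $ i = max 0 (min (?z $ i) 1))"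
      by (auto simp add: vec_eq_iff clip01_def dm)
    moreover have "P i \<longleftrightarrow> D $ i $ i * xs $ i = max 0 (min (?z $ i) 1)" for i
      unfolding P_def vi using xsb[of i] by auto
    ultimately show ?thesis by simp
  qed
  show ?thesis unfolding proj_tc_def
    using tc_iff[OF cX assms(2)] step1 step2 by simp
qed

end
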